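(* Assume $\alpha_i\ge T_G$ and $K_i>C_G$ for $i=1,2$. For the layer clock (Algorithm SS-DC, described in the context), with arbitrary predicates $cond,cond_1$ and procedures $Initialization$, $Computation$ (not modifying $r_1,r_2$), every maximal execution starting from a configuration satisfying $WU$ is infinite, and in it every process executes action $NA$ — and hence increments its master clock $r_1$ — infinitely often.
   Context: $G=(V,E)$ is a finite connected undirected graph, $\mathcal N_p$ the neighbors of $p$. $T_G$ is the length of a longest chordless cycle of $G$ if $G$ has a cycle, and $2$ otherwise. $C_G$ is the minimum, over all cycle bases of $G$, of the length of a longest cycle in the basis (taken as $2$ if $G$ is acyclic). For $i\in\{1,2\}$, fix integers $\alpha_i\ge1$, $K_i\ge3$; $tail_i=\{-\alpha_i,\dots,0\}$, $tail^*_i=tail_i\setminus\{0\}$, $ring_i=\{0,\dots,K_i-1\}$, $\chi_i=tail_i\cup ring_i$, and $\varphi_i(x)=(x+1)\bmod K_i$ if $x\ge0$, $\varphi_i(x)=x+1$ if $x<0$. Fix an integer $\varrho\ge1$. Each process $p$ has registers $p.r_1\in\chi_1$, $p.r_2\in\chi_2$ and possibly other registers. Predicates at $p$, for $i=1,2$: $ConvergenceStep^i_p\equiv p.r_i\in tail^*_i\wedge\forall q\in\mathcal N_p:(q.r_i\in tail_i\wedge p.r_i\le q.r_i)$; $LocallyCorrect^i_p\equiv p.r_i\in ring_i\wedge\forall q\in\mathcal N_p:(q.r_i\in ring_i\wedge(p.r_i=q.r_i\vee p.r_i=\varphi_i(q.r_i)\vee\varphi_i(p.r_i)=q.r_i))$;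 $NormalStep^i_p\equiv p.r_i\in ring_i\wedge\forall q\in\mathcal N_p:(q.r_i=p.r_i\vee q.r_i=\varphi_i(p.r_i))$; $ResetInit^i_p\equiv\neg LocallyCorrect^i_p\wedge p.r_i\notin tail_i$; $NormalStep_p\equiv NormalStep^1_p\wedge LocallyCorrect^2_p$. Actions of $p$ (each executed atomically): $NA$: if $NormalStep_p$ then { if $p.r_1\equiv\varrho-1\pmod\varrho$ then { if $NormalStep^2_p\wedge cond$ then (if $cond_1$ then $p.r_2:=\varphi_2(p.r_2)$); execute $Initialization$ } else execute $Computation$; $p.r_1:=\varphi_1(p.r_1)$ }. For $i=1,2$: $CA_i$: if $ConvergenceStep^i_p$ then $p.r_i:=\varphi_i(p.r_i)$; $RA_i$: if $ResetInit^i_p$ then $p.r_i:=-\alpha_i$. Here $cond,cond_1$ are arbitrary predicates and $Initialization,Computation$ arbitrary procedures that only modify registers of $p$ other than $r_1,r_2$. Daemon: in each step a nonempty subset of processes having an enabled action is chosen (possibly unfairly), each executes one enabled action; a maximal execution is infinite or ends in a configuration with no enabled process. $WU_i$ holds iff for all $p$, $p.r_i\in ring_i$, and for every edge $\{p,q\}$, $\min((p.r_i-q.r_i)\bmod K_i,(q.r_i-p.r_i)\bmod K_i)\le1$. $WU=WU_1\wedge WU_2$. *)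

theory Defs
  imports Main
begin

text \<open>The graph is given by a symmetric irreflexive adjacency relation E on the
  finite vertex type 'v (all elements of 'v are vertices).\<close>

definition is_cycle :: "('v \<Rightarrow> 'v \<Rightarrow> bool) \<Rightarrow> 'v list \<Rightarrow> bool" where
  "is_cycle E vs \<longleftrightarrow> length vs \<ge> 3 \<and> distinct vs \<and>
     (\<forall>i < length vs. E (vs ! i) (vs ! ((i + 1) mod length vs)))"

definition chordless :: "('v \<Rightarrow> 'v \<Rightarrow> bool) \<Rightarrow> 'v list \<Rightarrow> bool" where
  "chordless E vs \<longleftrightarrow> (\<forall>i < length vs. \<forall>j < length vs.
     E (vs ! i) (vs ! j) \<longrightarrow> j = (i + 1) mod length vs \<or> i = (j + 1) mod length vs)"

definition has_cycle :: "('v \<Rightarrow> 'v \<Rightarrow> bool) \<Rightarrow> bool" where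
  "has_cycle E \<longleftrightarrow> (\<exists>vs. is_cycle E vs)"

definition graph_edges :: "('v \<Rightarrow> 'v \<Rightarrow> bool) \<Rightarrow> 'v set set" where
  "graph_edges E = {{p, q} | p q. E p q}"

definition cyc_edges :: "'v list \<Rightarrow> 'v set set" where
  "cyc_edges vs = {{vs ! i, vs ! ((i + 1) mod length vs)} | i. i < length vs}"

text \<open>Elements of the cycle space (over GF(2)): edge sets in which every vertex has even degree.\<close>
definition even_subgraph :: "('v \<Rightarrow> 'v \<Rightarrow> bool) \<Rightarrow> 'v set set \<Rightarrow> bool" where
  "even_subgraph E F \<longleftrightarrow> F \<subseteq> graph_edges E \<and> (\<forall>v. even (card {e \<in> F. v \<in> e}))"

text \<open>GF(2)-sum (iterated symmetric difference) of a finite family of edge sets.\<close>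
definition xsum :: "'e set set \<Rightarrow> 'e set" where
  "xsum S = {e. odd (card {C \<in> S. e \<in> C})}"

definition cycle_basis :: "('v \<Rightarrow> 'v \<Rightarrow> bool) \<Rightarrow> 'v set set set \<Rightarrow> bool" where
  "cycle_basis E B \<longleftrightarrow> finite B \<and> B \<subseteq> {cyc_edges vs | vs. is_cycle E vs} \<and>
     (\<forall>F. even_subgraph E F \<longrightarrow> (\<exists>!S. S \<subseteq> B \<and> xsum S = F))"

definition T_G :: "('v \<Rightarrow> 'v \<Rightarrow> bool) \<Rightarrow> nat" where
  "T_G E = (if has_cycle E then Max {length vs | vs. is_cycle E vs \<and> chordless E vs} else 2)"

text \<open>Length of a cycle = number of its edges.\<close>
definition C_G :: "('v \<Rightarrow> 'v \<Rightarrow> bool) \<Rightarrow> nat" where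
  "C_G E = (if has_cycle E then Min {Max (card ` B) | B. cycle_basis E B} else 2)"

record 's st =
  r1 :: int
  r2 :: int
  oth :: 's

text \<open>Parameters of Algorithm SS-DC: graph, alpha_1, alpha_2, K_1, K_2, rho, cond, cond_1,
  Initialization, Computation. The procedures return the new value of the other registers of p.\<close>
record ('v, 's) alg =
  gE :: "'v \<Rightarrow> 'v \<Rightarrow> bool"
  al1 :: int
  al2 :: int
  k1 :: int
  k2 :: int
  rho :: int
  cnd :: "('v \<Rightarrow> 's st) \<Rightarrow> 'v \<Rightarrow> bool"
  cnd1 :: "('v \<Rightarrow> 's st) \<Rightarrow> 'v \<Rightarrow> bool"
  ini :: "('v \<Rightarrow> 's st) \<Rightarrow> 'v \<Rightarrow> 's"
  cmp :: "('v \<Rightarrow> 's st) \<Rightarrow> 'v \<Rightarrow> 's"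

definition tl_set :: "int \<Rightarrow> int set" where "tl_set a = {-a..0}"
definition tlS_set :: "int \<Rightarrow> int set" where "tlS_set a = {-a..-1}"
definition ring_set :: "int \<Rightarrow> int set" where "ring_set K = {0..K-1}"

definition phi :: "int \<Rightarrow> int \<Rightarrow> int" where
  "phi K x = (if x \<ge> 0 then (x + 1) mod K else x + 1)"

definition ConvergenceStep ::
  "('v \<Rightarrow> 'v \<Rightarrow> bool) \<Rightarrow> int \<Rightarrow> ('s st \<Rightarrow> int) \<Rightarrow> ('v \<Rightarrow> 's st) \<Rightarrow> 'v \<Rightarrow> bool" where
  "ConvergenceStep E a R c p \<longleftrightarrow> R (c p) \<in> tlS_set a \<and>
     (\<forall>q. E p q \<longrightarrow> R (c q) \<in> tl_set a \<and> R (c p) \<le> R (c q))"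

definition LocallyCorrect ::
  "('v \<Rightarrow> 'v \<Rightarrow> bool) \<Rightarrow> int \<Rightarrow> ('s st \<Rightarrow> int) \<Rightarrow> ('v \<Rightarrow> 's st) \<Rightarrow> 'v \<Rightarrow> bool" where
  "LocallyCorrect E K R c p \<longleftrightarrow> R (c p) \<in> ring_set K \<and>
     (\<forall>q. E p q \<longrightarrow> R (c q) \<in> ring_set K \<and>
        (R (c p) = R (c q) \<or> R (c p) = phi K (R (c q)) \<or> phi K (R (c p)) = R (c q)))"

definition NormalStepR ::
  "('v \<Rightarrow> 'v \<Rightarrow> bool) \<Rightarrow> int \<Rightarrow> ('s st \<Rightarrow> int) \<Rightarrow> ('v \<Rightarrow> 's st) \<Rightarrow> 'v \<Rightarrow> bool" where
  "NormalStepR E K R c p \<longleftrightarrow> R (c p) \<in> ring_set K \<and>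
     (\<forall>q. E p q \<longrightarrow> R (c q) = R (c p) \<or> R (c q) = phi K (R (c p)))"

definition ResetInit ::
  "('v \<Rightarrow> 'v \<Rightarrow> bool) \<Rightarrow> int \<Rightarrow> int \<Rightarrow> ('s st \<Rightarrow> int) \<Rightarrow> ('v \<Rightarrow> 's st) \<Rightarrow> 'v \<Rightarrow> bool" where
  "ResetInit E K a R c p \<longleftrightarrow> \<not> LocallyCorrect E K R c p \<and> R (c p) \<notin> tl_set a"

definition NormalStep :: "('v, 's) alg \<Rightarrow> ('v \<Rightarrow> 's st) \<Rightarrow> 'v \<Rightarrow> bool" where
  "NormalStep P c p \<longleftrightarrow> NormalStepR (gE P) (k1 P) r1 c p \<and> LocallyCorrect (gE P) (k2 P) r2 c p"

datatype action = NA | CA1 | CA2 | RA1 | RA2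

definition enabled :: "('v, 's) alg \<Rightarrow> ('v \<Rightarrow> 's st) \<Rightarrow> 'v \<Rightarrow> action \<Rightarrow> bool" where
  "enabled P c p a = (case a of
      NA \<Rightarrow> NormalStep P c p
    | CA1 \<Rightarrow> ConvergenceStep (gE P) (al1 P) r1 c p
    | CA2 \<Rightarrow> ConvergenceStep (gE P) (al2 P) r2 c p
    | RA1 \<Rightarrow> ResetInit (gE P) (k1 P) (al1 P) r1 c p
    | RA2 \<Rightarrow> ResetInit (gE P) (k2 P) (al2 P) r2 c p)"

text \<open>In NA, the Initialization procedure is run after the possible update of r_2
  (it sees the configuration in which p.r_2 has been updated).\<close>
definition result :: "('v, 's) alg \<Rightarrow> ('v \<Rightarrow> 's st) \<Rightarrow> 'v \<Rightarrow> action \<Rightarrow> 's st" where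
  "result P c p a = (let s = c p in case a of
      NA \<Rightarrow>
        (if r1 s mod rho P = (rho P - 1) mod rho P then
           (let s' = (if NormalStepR (gE P) (k2 P) r2 c p \<and> cnd P c p \<and> cnd1 P c p
                      then s\<lparr>r2 := phi (k2 P) (r2 s)\<rparr> else s);
                s'' = s'\<lparr>oth := ini P (c(p := s')) p\<rparr>
            in s''\<lparr>r1 := phi (k1 P) (r1 s)\<rparr>)
         else s\<lparr>oth := cmp P c p, r1 := phi (k1 P) (r1 s)\<rparr>)
    | CA1 \<Rightarrow> s\<lparr>r1 := phi (k1 P) (r1 s)\<rparr>
    | CA2 \<Rightarrow> s\<lparr>r2 := phi (k2 P) (r2 s)\<rparr>
    | RA1 \<Rightarrow> s\<lparr>r1 := - al1 P\<rparr>
    | RA2 \<Rightarrow> s\<lparr>r2 := - al2 P\<rparr>)"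

text \<open>One step of the distributed (unfair) daemon: sigma p = Some a means p is chosen and
  executes the enabled action a; sigma p = None means p is not chosen. At least one
  process is chosen.\<close>
definition step :: "('v, 's) alg \<Rightarrow> ('v \<Rightarrow> 's st) \<Rightarrow> ('v \<Rightarrow> action option) \<Rightarrow> ('v \<Rightarrow> 's st) \<Rightarrow> bool" where
  "step P c \<sigma> c' \<longleftrightarrow> (\<exists>p. \<sigma> p \<noteq> None) \<and>
     (\<forall>p. case \<sigma> p of
            None \<Rightarrow> c' p = c p
          | Some a \<Rightarrow> enabled P c p a \<and> c' p = result P c p a)"

definition WU_i :: "('v \<Rightarrow> 'v \<Rightarrow> bool) \<Rightarrow> int \<Rightarrow> ('s st \<Rightarrow> int) \<Rightarrow> ('v \<Rightarrow> 's st) \<Rightarrow> bool" where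
  "WU_i E K R c \<longleftrightarrow> (\<forall>p. R (c p) \<in> ring_set K) \<and>
     (\<forall>p q. E p q \<longrightarrow> min ((R (c p) - R (c q)) mod K) ((R (c q) - R (c p)) mod K) \<le> 1)"

definition WU :: "('v, 's) alg \<Rightarrow> ('v \<Rightarrow> 's st) \<Rightarrow> bool" where
  "WU P c \<longleftrightarrow> WU_i (gE P) (k1 P) r1 c \<and> WU_i (gE P) (k2 P) r2 c"

end

theory Submission
  imports Defs
begin

definition nx :: "'a list \<Rightarrow> nat \<Rightarrow> 'a" where "nx vs i = vs ! ((i+1) mod length vs)"

definition ow :: "'v list \<Rightarrow> 'v \<Rightarrow> 'v \<Rightarrow> int" where
  "ow vs p q = (\<Sum>i<length vs. (if vs!i = p \<and> nx vs i = q then 1 else 0) - (if vs!i = q \<and> nx vs i = p then 1 else 0))"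

definition zc :: "('v::finite \<Rightarrow> 'v \<Rightarrow> bool) \<Rightarrow> ('v \<Rightarrow> 'v \<Rightarrow> int) \<Rightarrow> bool" where
  "zc E z \<longleftrightarrow> (\<forall>p q. z q p = - z p q) \<and> (\<forall>p q. \<not> E p q \<longrightarrow> z p q = 0) \<and> (\<forall>p. (\<Sum>q\<in>UNIV. z p q) = 0)"

definition oddsupp :: "('v \<Rightarrow> 'v \<Rightarrow> bool) \<Rightarrow> ('v \<Rightarrow> 'v \<Rightarrow> int) \<Rightarrow> 'v set set" where
  "oddsupp E z = {{p,q}| p q. E p q \<and> odd (z p q)}"

definition dr :: "('v::finite \<Rightarrow> 'v \<Rightarrow> int) \<Rightarrow> ('v \<Rightarrow> 'v \<Rightarrow> int) \<Rightarrow> int" where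
  "dr d z = (\<Sum>p\<in>UNIV. \<Sum>q\<in>UNIV. z p q * d p q)"

lemma sum_rot: "(\<Sum>i<(L::nat). g ((i+1) mod L)) = (\<Sum>i<L. g i)"
proof (cases L)
  case 0 then show ?thesis by simp
next
  case (Suc m)
  have "(\<Sum>i<Suc m. g ((i+1) mod Suc m)) = (\<Sum>i<m. g ((i+1) mod Suc m)) + g 0"
    by simp
  also have "(\<Sum>i<m. g ((i+1) mod Suc m)) = (\<Sum>i<m. g (Suc i))"
    by (rule sum.cong) auto
  also have "\<dots> + g 0 = (\<Sum>i<Suc m. g i)"
    by (simp only: sum.lessThan_Suc_shift add.commute)
  finally show ?thesis using Suc by simp
qed

lemma even_sum_iff:
  fixes f :: "'a \<Rightarrow> int"
  assumes "finite A"
  shows "even (\<Sum>x\<in>A. f x) \<longleftrightarrow> even (card {x\<in>A. odd (f x)})"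
  using assms
proof (induction A rule: finite_induct)
  case empty then show ?case by simp
next
  case (insert a A)
  have "{x\<in>insert a A. odd (f x)} = (if odd (f a) then insert a {x\<in>A. odd (f x)} else {x\<in>A. odd (f x)})"
    by auto
  then show ?case using insert by auto
qed

lemma mod_cyc: "(i::nat) < L \<Longrightarrow> (i+1) mod L = (if i + 1 < L then i+1 else 0)"
  by (auto simp: not_less) (metis le_antisym mod_self Suc_leI add.commute plus_1_eq_Suc)

lemma two_cyc: "(i::nat) < L \<Longrightarrow> j < L \<Longrightarrow> 3 \<le> L \<Longrightarrow> (i+1) mod L = j \<Longrightarrow> (j+1) mod L = i \<Longrightarrow> False"
  using mod_cyc[of i L] mod_cyc[of j L] by (auto split: if_splits)

definition cw :: "('v \<Rightarrow> 'v \<Rightarrow> bool) \<Rightarrow> 'v list \<Rightarrow> bool" where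
  "cw E vs \<longleftrightarrow> vs \<noteq> [] \<and> (\<forall>i<length vs. E (vs!i) (nx vs i))"

lemma sum_ind1: "(\<Sum>q\<in>(UNIV::'a::finite set). if P \<and> b = q then (1::int) else 0) = (if P then 1 else 0)"
  by (cases P) simp_all

lemma sum_ind2: "(\<Sum>q\<in>(UNIV::'a::finite set). if q = b \<and> P then (1::int) else 0) = (if P then 1 else 0)"
  by (cases P) simp_all

lemma sum_ind3: "(\<Sum>q\<in>(UNIV::'a::finite set). if a = q \<and> P then (f q::int) else 0) = (if P then f a else 0)"
  by (cases P) simp_all

lemma ind_pair: "(\<Sum>q\<in>(UNIV::'a::finite set). (if a = p \<and> b = q then (1::int) else 0) - (if a = q \<and> b = p then 1 else 0)) = (if a = p then 1 else 0) - (if b = p then 1 else 0)"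
proof -
  have 1: "(\<Sum>q\<in>(UNIV::'a set). (if a = p \<and> b = q then (1::int) else 0)) = (if a = p then 1 else 0)"
    by (cases "a = p") auto
  have 2: "(\<Sum>q\<in>(UNIV::'a set). (if a = q \<and> b = p then (1::int) else 0)) = (if b = p then 1 else 0)"
    by (cases "b = p") auto
  show ?thesis by (simp only: sum_subtractf 1 2)
qed

lemma ind_d: "(\<Sum>p\<in>(UNIV::'a::finite set). \<Sum>q\<in>(UNIV::'a set). (if a = p \<and> b = q then (1::int) else 0) * d p q) = d a b"
proof -
  have e: "(if a = p \<and> b = q then (1::int) else 0) * d p q = (if a = p \<and> b = q then d p q else 0)" for p q
    by simp
  have "(\<Sum>q\<in>(UNIV::'a set). (if a = p \<and> b = q then d p q else 0)) = (if a = p then d p b else 0)" for p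
    by (cases "a = p") auto
  then show ?thesis by (simp only: e) simp
qed

lemma triple_swap: "(\<Sum>p\<in>A. \<Sum>q\<in>B. \<Sum>i\<in>C. F p q i) = (\<Sum>i\<in>C. \<Sum>p\<in>A. \<Sum>q\<in>B. F p q i)"
proof -
  have "(\<Sum>p\<in>A. \<Sum>q\<in>B. \<Sum>i\<in>C. F p q i) = (\<Sum>p\<in>A. \<Sum>i\<in>C. \<Sum>q\<in>B. F p q i)"
    by (rule sum.cong[OF refl], rule sum.swap)
  also have "\<dots> = (\<Sum>i\<in>C. \<Sum>p\<in>A. \<Sum>q\<in>B. F p q i)" by (rule sum.swap)
  finally show ?thesis .
qed

locale G =
  fixes E :: "'v::finite \<Rightarrow> 'v \<Rightarrow> bool"
  assumes sym: "\<forall>p q. E p q \<longrightarrow> E q p" and irr: "\<forall>p. \<not> E p p"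
begin

lemma ow_antisym: "ow (vs::'v list) q p = - ow vs p q"
  unfolding ow_def sum_negf[symmetric] by (rule sum.cong) auto

lemma ow_div: "(\<Sum>q\<in>UNIV. ow (vs::'v list) p q) = 0"
proof -
  have "(\<Sum>q\<in>UNIV. ow vs p q) = (\<Sum>i<length vs. \<Sum>q\<in>UNIV. (if vs!i = p \<and> nx vs i = q then 1 else 0) - (if vs!i = q \<and> nx vs i = p then 1 else 0))"
    unfolding ow_def by (rule sum.swap)
  also have "\<dots> = (\<Sum>i<length vs. (if vs!i = p then 1 else 0) - (if nx vs i = p then 1 else 0))"
    by (rule sum.cong[OF refl], rule ind_pair)
  also have "\<dots> = (\<Sum>i<length vs. (if vs!i = p then 1 else 0)) - (\<Sum>i<length vs. (if vs ! ((i+1) mod length vs) = p then 1 else 0))"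
    by (simp add: sum_subtractf nx_def)
  also have "\<dots> = 0" using sum_rot[of "\<lambda>j. if vs!j = p then (1::int) else 0" "length vs"] by simp
  finally show ?thesis .
qed

lemma zc_ow: assumes "cw E (vs::'v list)" shows "zc E (ow vs)"
proof -
  have "ow vs p q = 0" if "\<not> E p q" for p q
  proof -
    have nn: "\<not> (vs!i = p \<and> nx vs i = q) \<and> \<not> (vs!i = q \<and> nx vs i = p)" if "i < length vs" for i
    proof -
      have "E (vs!i) (nx vs i)" using assms that unfolding cw_def by blast
      then show ?thesis using \<open>\<not> E p q\<close> sym[rule_format, of q p] by auto
    qed
    show ?thesis unfolding ow_def
    proof (intro sum.neutral ballI)
      fix i assume "i \<in> {..<length vs}"
      then have "\<not> (vs!i = p \<and> nx vs i = q)" "\<not> (vs!i = q \<and> nx vs i = p)" using nn by auto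
      then show "(if vs!i = p \<and> nx vs i = q then 1 else 0) - (if vs!i = q \<and> nx vs i = p then 1 else (0::int)) = 0"
        by (simp only: if_False)
    qed
  qed
  then show ?thesis unfolding zc_def
  proof (intro conjI allI impI)
    fix p q show "ow vs q p = - ow vs p q" by (rule ow_antisym)
  next
    fix p show "(\<Sum>q\<in>UNIV. ow vs p q) = 0" by (rule ow_div)
  qed
qed

lemma dr_ow:
  assumes d: "\<forall>p q. E p q \<longrightarrow> d q p = - d p q" and c: "cw E (vs::'v list)"
  shows "dr d (ow vs) = 2 * (\<Sum>i<length vs. d (vs!i) (nx vs i))"
proof -
  have "dr d (ow vs) = (\<Sum>p\<in>UNIV. \<Sum>q\<in>UNIV. \<Sum>i<length vs. ((if vs!i = p \<and> nx vs i = q then 1 else 0) - (if vs!i = q \<and> nx vs i = p then 1 else 0)) * d p q)"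
    unfolding dr_def ow_def by (simp add: sum_distrib_right)
  also have "\<dots> = (\<Sum>i<length vs. \<Sum>p\<in>UNIV. \<Sum>q\<in>UNIV. ((if vs!i = p \<and> nx vs i = q then 1 else 0) - (if vs!i = q \<and> nx vs i = p then 1 else 0)) * d p q)"
    by (rule triple_swap)
  also have "\<dots> = (\<Sum>i<length vs. d (vs!i) (nx vs i) - d (nx vs i) (vs!i))"
  proof (rule sum.cong)
    fix i assume "i \<in> {..<length vs}"
    show "(\<Sum>p\<in>UNIV. \<Sum>q\<in>UNIV. ((if vs!i = p \<and> nx vs i = q then 1 else 0) - (if vs!i = q \<and> nx vs i = p then 1 else 0)) * d p q) = d (vs!i) (nx vs i) - d (nx vs i) (vs!i)"
    proof -
      have e: "((if vs!i = p \<and> nx vs i = q then 1 else 0) - (if vs!i = q \<and> nx vs i = p then 1 else 0)) * d p q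
        = (if vs!i = p \<and> nx vs i = q then 1 else 0) * d p q - (if nx vs i = p \<and> vs!i = q then 1 else 0) * d p q" for p q
        by (auto simp: left_diff_distrib)
      show ?thesis by (simp only: e sum_subtractf ind_d)
    qed
  qed (rule refl)
  also have "\<dots> = (\<Sum>i<length vs. 2 * d (vs!i) (nx vs i))"
  proof (rule sum.cong[OF refl])
    fix i assume "i \<in> {..<length vs}"
    then have "E (vs!i) (nx vs i)" using c unfolding cw_def by auto
    then have "d (nx vs i) (vs!i) = - d (vs!i) (nx vs i)" using d by blast
    then show "d (vs!i) (nx vs i) - d (nx vs i) (vs!i) = 2 * d (vs!i) (nx vs i)" by simp
  qed
  finally show ?thesis by (simp only: sum_distrib_left)
qed


lemma cyc_cw: "is_cycle E (vs::'v list) \<Longrightarrow> cw E vs"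
  unfolding is_cycle_def cw_def nx_def by auto

lemma cyc_idx: "is_cycle E (vs::'v list) \<Longrightarrow> i < length vs \<Longrightarrow> j < length vs \<Longrightarrow> vs!i = vs!j \<Longrightarrow> i = j"
  unfolding is_cycle_def using nth_eq_iff_index_eq by blast

lemma cyc_len: "is_cycle E (vs::'v list) \<Longrightarrow> 3 \<le> length vs"
  unfolding is_cycle_def by blast

lemma cnt_le1:
  assumes c: "is_cycle E (vs::'v list)"
  shows "(\<Sum>i<length vs. if vs!i = a \<and> nx vs i = b then (1::int) else 0) = (if \<exists>i<length vs. vs!i = a \<and> nx vs i = b then 1 else 0)"
proof (cases "\<exists>i<length vs. vs!i = a \<and> nx vs i = b")
  case True
  then obtain i0 where i0: "i0 < length vs" "vs!i0 = a" "nx vs i0 = b" by blast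
  have "(\<Sum>i<length vs. if vs!i = a \<and> nx vs i = b then (1::int) else 0) = (\<Sum>i<length vs. if i = i0 then 1 else 0)"
  proof (rule sum.cong[OF refl])
    fix i assume i: "i \<in> {..<length vs}"
    have "(vs!i = a \<and> nx vs i = b) = (i = i0)"
    proof
      assume "vs!i = a \<and> nx vs i = b"
      then show "i = i0" using cyc_idx[OF c, of i i0] i i0 by simp
    next
      assume "i = i0" then show "vs!i = a \<and> nx vs i = b" using i0 by simp
    qed
    then show "(if vs!i = a \<and> nx vs i = b then (1::int) else 0) = (if i = i0 then 1 else 0)" by simp
  qed
  also have "\<dots> = 1" using i0 by simp
  finally show ?thesis using True by simp
next
  case False
  then have "\<forall>i\<in>{..<length vs}. \<not> (vs!i = a \<and> nx vs i = b)" by blast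
  then have "(\<Sum>i<length vs. if vs!i = a \<and> nx vs i = b then (1::int) else 0) = 0"
  proof (intro sum.neutral ballI)
    fix i assume "i \<in> {..<length vs}" "\<forall>i\<in>{..<length vs}. \<not> (vs!i = a \<and> nx vs i = b)"
    then have "\<not> (vs!i = a \<and> nx vs i = b)" by blast
    then show "(if vs!i = a \<and> nx vs i = b then (1::int) else 0) = 0" by (simp only: if_False)
  qed
  then show ?thesis using False by simp
qed

lemma ow_val:
  assumes c: "is_cycle E (vs::'v list)"
  shows "ow vs p q = (if \<exists>i<length vs. vs!i = p \<and> nx vs i = q then 1 else 0) - (if \<exists>i<length vs. vs!i = q \<and> nx vs i = p then 1 else 0)"
  unfolding ow_def sum_subtractf cnt_le1[OF c] by (rule refl)

lemma nx_idx: "is_cycle E (vs::'v list) \<Longrightarrow> i < length vs \<Longrightarrow> j < length vs \<Longrightarrow> nx vs i = vs ! j \<Longrightarrow> (i+1) mod length vs = j"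
proof -
  assume c: "is_cycle E vs" and i: "i < length vs" and j: "j < length vs" and e: "nx vs i = vs ! j"
  have "0 < length vs" using i by linarith
  then have "(i+1) mod length vs < length vs" by simp
  then show ?thesis using cyc_idx[OF c _ j] e unfolding nx_def by blast
qed

lemma not_both:
  assumes c: "is_cycle E (vs::'v list)"
    and i: "i < length vs" "vs!i = p" "nx vs i = q" and j: "j < length vs" "vs!j = q" "nx vs j = p"
  shows False
proof -
  have "(i+1) mod length vs = j" using nx_idx[OF c i(1) j(1)] i j by simp
  moreover have "(j+1) mod length vs = i" using nx_idx[OF c j(1) i(1)] i j by simp
  ultimately show False using two_cyc[OF i(1) j(1) cyc_len[OF c]] by blast
qed

lemma cyc_edges_alt: "cyc_edges vs = (\<lambda>i. {vs!i, nx vs i}) ` {..<length vs}"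
  unfolding cyc_edges_def nx_def by auto

lemma ow_odd:
  assumes c: "is_cycle E (vs::'v list)"
  shows "odd (ow vs p q) \<longleftrightarrow> {p,q} \<in> cyc_edges vs"
proof -
  let ?A = "\<exists>i<length vs. vs!i = p \<and> nx vs i = q"
  let ?B = "\<exists>i<length vs. vs!i = q \<and> nx vs i = p"
  have nb: "\<not> (?A \<and> ?B)" using not_both[OF c] by blast
  have "odd (ow vs p q) \<longleftrightarrow> ?A \<or> ?B" using nb unfolding ow_val[OF c] by auto
  also have "\<dots> \<longleftrightarrow> (\<exists>i<length vs. {vs!i, nx vs i} = {p,q})"
    by (auto simp: doubleton_eq_iff)
  also have "\<dots> \<longleftrightarrow> {p,q} \<in> cyc_edges vs"
    unfolding cyc_edges_alt by auto
  finally show ?thesis .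
qed

lemma zc_odd_sym: "zc E z \<Longrightarrow> odd (z q p) \<longleftrightarrow> odd (z p q)"
  unfolding zc_def by (metis even_minus)

lemma zc_zero: "zc E z \<Longrightarrow> \<not> E p q \<Longrightarrow> z p q = 0"
  unfolding zc_def by blast

lemma oddsupp_mem:
  assumes z: "zc E z" shows "{p,q} \<in> oddsupp E z \<longleftrightarrow> odd (z p q)"
proof
  assume "{p,q} \<in> oddsupp E z"
  then obtain a b where ab: "{p,q} = {a,b}" "E a b" "odd (z a b)" unfolding oddsupp_def by blast
  then have "(p = a \<and> q = b) \<or> (p = b \<and> q = a)" by (simp add: doubleton_eq_iff)
  then show "odd (z p q)"
  proof
    assume "p = a \<and> q = b" then show ?thesis using ab by simp
  next
    assume "p = b \<and> q = a" then show ?thesis using ab zc_odd_sym[OF z, of b a] by simp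
  qed
next
  assume o: "odd (z p q)"
  then have "E p q" using zc_zero[OF z, of p q] by fastforce
  then show "{p,q} \<in> oddsupp E z" using o unfolding oddsupp_def by blast
qed

lemma even_oddsupp:
  assumes z: "zc E z" shows "even_subgraph E (oddsupp E z)"
proof -
  have sub: "oddsupp E z \<subseteq> graph_edges E" unfolding oddsupp_def graph_edges_def by blast
  have "even (card {e \<in> oddsupp E z. v \<in> e})" for v
  proof -
    have eq: "{e \<in> oddsupp E z. v \<in> e} = (\<lambda>q. {v,q}) ` {q. odd (z v q)}"
    proof
      show "{e \<in> oddsupp E z. v \<in> e} \<subseteq> (\<lambda>q. {v,q}) ` {q. odd (z v q)}"
      proof
        fix e assume e: "e \<in> {e \<in> oddsupp E z. v \<in> e}"
        then obtain a b where ab: "e = {a,b}" "E a b" "odd (z a b)" unfolding oddsupp_def by blast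
        have "v = a \<or> v = b" using e ab by blast
        then show "e \<in> (\<lambda>q. {v,q}) ` {q. odd (z v q)}"
        proof
          assume "v = a" then show ?thesis using ab by blast
        next
          assume vb: "v = b" 
          have "e = {v,a}" using ab vb by (simp add: insert_commute)
          moreover have "odd (z v a)" using ab vb zc_odd_sym[OF z, of b a] by simp
          ultimately show ?thesis by blast
        qed
      qed
    next
      show "(\<lambda>q. {v,q}) ` {q. odd (z v q)} \<subseteq> {e \<in> oddsupp E z. v \<in> e}"
      proof
        fix e assume "e \<in> (\<lambda>q. {v,q}) ` {q. odd (z v q)}"
        then obtain q where "e = {v,q}" "odd (z v q)" by blast
        then show "e \<in> {e \<in> oddsupp E z. v \<in> e}" using oddsupp_mem[OF z, of v q] by simp
      qed
    qed
    have inj: "inj_on (\<lambda>q. {v,q}) {q. odd (z v q)}"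
    proof (rule inj_onI)
      fix q q' assume q: "q \<in> {q. odd (z v q)}" and q': "q' \<in> {q. odd (z v q)}" and eqq: "{v,q} = {v,q'}"
      have "z v v = 0" using zc_zero[OF z] irr by blast
      then have "q \<noteq> v" using q by auto
      then show "q = q'" using eqq by (auto simp: doubleton_eq_iff)
    qed
    have "card {e \<in> oddsupp E z. v \<in> e} = card {q. odd (z v q)}"
      unfolding eq using card_image[OF inj] .
    moreover have "even (card {q\<in>UNIV. odd (z v q)})"
    proof -
      have "(\<Sum>q\<in>UNIV. z v q) = 0" using z unfolding zc_def by blast
      then show ?thesis using even_sum_iff[of UNIV "z v"] by simp
    qed
    ultimately show ?thesis by simp
  qed
  then show ?thesis using sub unfolding even_subgraph_def by blast
qed

lemma cyc_oddsupp:
  assumes c: "is_cycle E (vs::'v list)" shows "oddsupp E (ow vs) = cyc_edges vs"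
proof
  show "oddsupp E (ow vs) \<subseteq> cyc_edges vs"
  proof
    fix e assume "e \<in> oddsupp E (ow vs)"
    then obtain a b where ab: "e = {a,b}" "odd (ow vs a b)" unfolding oddsupp_def by blast
    then show "e \<in> cyc_edges vs" using ow_odd[OF c, of a b] by simp
  qed
next
  show "cyc_edges vs \<subseteq> oddsupp E (ow vs)"
  proof
    fix e assume "e \<in> cyc_edges vs"
    then obtain i where i: "i < length vs" "e = {vs!i, nx vs i}" unfolding cyc_edges_alt by blast
    have "E (vs!i) (nx vs i)" using cyc_cw[OF c] i(1) unfolding cw_def by blast
    moreover have "{vs!i, nx vs i} \<in> cyc_edges vs" unfolding cyc_edges_alt using i(1) by blast
    then have "odd (ow vs (vs!i) (nx vs i))" using ow_odd[OF c, of "vs!i" "nx vs i"] by simp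
    ultimately show "e \<in> oddsupp E (ow vs)" unfolding i(2) oddsupp_def by blast
  qed
qed

lemma even_cyc: assumes c: "is_cycle E (vs::'v list)" shows "even_subgraph E (cyc_edges vs)"
proof -
  have "even_subgraph E (oddsupp E (ow vs))" by (rule even_oddsupp[OF zc_ow[OF cyc_cw[OF c]]])
  then show ?thesis by (simp only: cyc_oddsupp[OF c])
qed

lemma card_cyc:
  assumes c: "is_cycle E (vs::'v list)" shows "card (cyc_edges vs) = length vs"
proof -
  have "inj_on (\<lambda>i. {vs!i, nx vs i}) {..<length vs}"
  proof (rule inj_onI)
    fix i j assume i: "i \<in> {..<length vs}" and j: "j \<in> {..<length vs}" and e: "{vs!i, nx vs i} = {vs!j, nx vs j}"
    have ij: "i < length vs" "j < length vs" using i j by auto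
    have "(vs!i = vs!j \<and> nx vs i = nx vs j) \<or> (vs!i = nx vs j \<and> nx vs i = vs!j)"
      using e by (simp add: doubleton_eq_iff)
    then show "i = j"
    proof
      assume "vs!i = vs!j \<and> nx vs i = nx vs j" then show ?thesis using cyc_idx[OF c ij] by blast
    next
      assume a: "vs!i = nx vs j \<and> nx vs i = vs!j"
      have "vs!j = nx vs i" "nx vs j = vs!i" using a by simp_all
      then show ?thesis using not_both[OF c ij(1) refl refl ij(2)] by blast
    qed
  qed
  then have "card ((\<lambda>i. {vs!i, nx vs i}) ` {..<length vs}) = card {..<length vs}" by (rule card_image)
  then show ?thesis unfolding cyc_edges_alt by simp
qed

end


lemma xsum_empty: "xsum {} = {}" unfolding xsum_def by simp

lemma xsum_single: "xsum {C} = C"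
proof -
  have "card {C' \<in> {C}. e \<in> C'} = (if e \<in> C then 1 else 0)" for e
    by (cases "e \<in> C") (auto simp: Collect_conv_if)
  then show ?thesis unfolding xsum_def by auto
qed

lemma card_symdiff: "finite A \<Longrightarrow> finite B \<Longrightarrow> card (A - B \<union> (B - A)) + 2 * card (A \<inter> B) = card A + card B"
proof -
  assume f: "finite A" "finite B"
  have u: "A \<union> B = (A - B \<union> (B - A)) \<union> (A \<inter> B)" by blast
  have "card (A \<union> B) = card (A - B \<union> (B - A)) + card (A \<inter> B)"
    unfolding u by (rule card_Un_disjoint) (use f in auto)
  moreover have "card A + card B = card (A \<union> B) + card (A \<inter> B)" using card_Un_Int[OF f] .
  ultimately show ?thesis by simp
qed

lemma xsum_symdiff:
  assumes "finite S" "finite T"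
  shows "xsum (S - T \<union> (T - S)) = xsum S - xsum T \<union> (xsum T - xsum S)"
proof -
  have "odd (card {C \<in> S - T \<union> (T - S). e \<in> C}) \<longleftrightarrow> odd (card {C\<in>S. e \<in> C}) \<noteq> odd (card {C\<in>T. e \<in> C})" for e
  proof -
    let ?A = "{C\<in>S. e \<in> C}" and ?B = "{C\<in>T. e \<in> C}"
    have eq: "{C \<in> S - T \<union> (T - S). e \<in> C} = ?A - ?B \<union> (?B - ?A)" by blast
    have "card (?A - ?B \<union> (?B - ?A)) + 2 * card (?A \<inter> ?B) = card ?A + card ?B"
      by (rule card_symdiff) (use assms in auto)
    then show ?thesis unfolding eq by presburger
  qed
  then show ?thesis unfolding xsum_def by blast
qed

context G begin

lemma ge_E: "{x,y} \<in> graph_edges E \<Longrightarrow> E x y"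
  unfolding graph_edges_def using sym by (auto simp: doubleton_eq_iff)

definition path :: "'v set set \<Rightarrow> 'v list \<Rightarrow> bool" where
  "path F ps \<longleftrightarrow> distinct ps \<and> (\<forall>i. Suc i < length ps \<longrightarrow> {ps!i, ps!Suc i} \<in> F)"

lemma find_cycle:
  assumes ev: "even_subgraph E F" and ne: "F \<noteq> {}"
  shows "\<exists>vs. is_cycle E vs \<and> cyc_edges vs \<subseteq> F"
proof -
  have FG: "F \<subseteq> graph_edges E" using ev unfolding even_subgraph_def by blast
  obtain e0 where e0: "e0 \<in> F" using ne by blast
  then obtain a b where ab: "e0 = {a,b}" "E a b" using FG unfolding graph_edges_def by blast
  have "a \<noteq> b" using ab irr by blast
  then have "path F [a,b]" unfolding path_def using e0 ab by (auto simp: less_Suc_eq)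
  then have P0: "path F [a,b] \<and> 2 \<le> length [a,b]" by simp
  have bnd: "\<forall>ps. path F ps \<and> 2 \<le> length ps \<longrightarrow> length ps < card (UNIV::'v set) + 1"
  proof (intro allI impI)
    fix ps assume "path F ps \<and> 2 \<le> length ps"
    then have "distinct ps" unfolding path_def by blast
    then have "length ps = card (set ps)" by (simp add: distinct_card)
    also have "\<dots> \<le> card (UNIV::'v set)" by (rule card_mono) auto
    finally show "length ps < card (UNIV::'v set) + 1" by simp
  qed
  obtain ps where ps: "path F ps" "2 \<le> length ps"
    and mx: "\<forall>qs. path F qs \<and> 2 \<le> length qs \<longrightarrow> length qs \<le> length ps"
    using ex_has_greatest_nat[OF P0 bnd] by blast
  define v where "v = ps!0"
  define u where "u = ps!1"
  have vu: "{v,u} \<in> F" using ps unfolding path_def v_def u_def by (metis One_nat_def Suc_1 Suc_le_lessD)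
  let ?D = "{e\<in>F. v \<in> e}"
  have "?D - {{v,u}} \<noteq> {}"
  proof
    assume "?D - {{v,u}} = {}"
    then have "?D = {{v,u}}" using vu by blast
    then have "card ?D = 1" by simp
    then show False using ev unfolding even_subgraph_def by (metis odd_one)
  qed
  then obtain e' where e': "e' \<in> F" "v \<in> e'" "e' \<noteq> {v,u}" by blast
  obtain a' b' where a'b': "e' = {a',b'}" "E a' b'" using e' FG unfolding graph_edges_def by blast
  obtain w where w: "e' = {v,w}" using a'b' e' by (metis insert_commute insertE singletonD)
  have Evw: "E v w" using ge_E w e' FG by blast
  have wv: "w \<noteq> v" using Evw irr by blast
  have wu: "w \<noteq> u" using w e' by blast
  have "w \<in> set ps"
  proof (rule ccontr)
    assume nw: "w \<notin> set ps"
    have "path F (w # ps)"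
      unfolding path_def
    proof (intro conjI allI impI)
      show "distinct (w # ps)" using nw ps unfolding path_def by simp
    next
      fix i assume i: "Suc i < length (w # ps)"
      show "{(w#ps)!i, (w#ps)!Suc i} \<in> F"
      proof (cases i)
        case 0 then show ?thesis using w e' v_def by (simp add: insert_commute)
      next
        case (Suc k) then show ?thesis using ps i unfolding path_def by simp
      qed
    qed
    then have "length (w#ps) \<le> length ps" using mx ps by fastforce
    then show False by simp
  qed
  then obtain j where j: "j < length ps" "ps!j = w" by (metis in_set_conv_nth)
  have j2: "2 \<le> j"
  proof -
    have "j \<noteq> 0" proof assume "j = 0" then show False using j wv v_def by simp qed
    moreover have "j \<noteq> 1" proof assume "j = 1" then show False using j wu u_def by simp qed
    ultimately show ?thesis by simp
  qed
  define vs where "vs = take (Suc j) ps"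
  have lvs: "length vs = Suc j" using j unfolding vs_def by simp
  have nth_vs: "vs!i = ps!i" if "i < Suc j" for i using that unfolding vs_def by simp
  have edges: "{vs!i, nx vs i} \<in> F" if i: "i < length vs" for i
  proof (cases "i < j")
    case True
    then have "nx vs i = ps!Suc i" unfolding nx_def lvs using nth_vs by simp
    moreover have "{ps!i, ps!Suc i} \<in> F" using ps True j unfolding path_def by simp
    ultimately show ?thesis using nth_vs i lvs by simp
  next
    case False
    then have ij: "i = j" using i lvs by simp
    then have "nx vs i = ps!0" unfolding nx_def lvs using nth_vs by simp
    then show ?thesis using ij nth_vs[of j] j w e' v_def by (simp add: insert_commute)
  qed
  have "is_cycle E vs"
    unfolding is_cycle_def
  proof (intro conjI allI impI)
    show "3 \<le> length vs" using lvs j2 by simp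
    show "distinct vs" using ps unfolding path_def vs_def by simp
    fix i assume "i < length vs"
    then have "{vs!i, nx vs i} \<in> F" by (rule edges)
    then show "E (vs ! i) (vs ! ((i + 1) mod length vs))" using ge_E FG unfolding nx_def by blast
  qed
  moreover have "cyc_edges vs \<subseteq> F" unfolding cyc_edges_alt using edges by blast
  ultimately show ?thesis by blast
qed


lemma even_diff_cyc:
  assumes ev: "even_subgraph E F" and c: "is_cycle E vs" and sub: "cyc_edges vs \<subseteq> F"
  shows "even_subgraph E (F - cyc_edges vs)"
  unfolding even_subgraph_def
proof (intro conjI allI)
  show "F - cyc_edges vs \<subseteq> graph_edges E" using ev unfolding even_subgraph_def by blast
  fix v
  have e1: "even (card {e\<in>F. v \<in> e})" using ev unfolding even_subgraph_def by blast
  have e2: "even (card {e\<in>cyc_edges vs. v \<in> e})" using even_cyc[OF c] unfolding even_subgraph_def by blast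
  have eq: "{e \<in> F - cyc_edges vs. v \<in> e} = {e\<in>F. v \<in> e} - {e\<in>cyc_edges vs. v \<in> e}" by blast
  have "card {e \<in> F - cyc_edges vs. v \<in> e} = card {e\<in>F. v \<in> e} - card {e\<in>cyc_edges vs. v \<in> e}"
    unfolding eq by (rule card_Diff_subset) (use sub in auto)
  then show "even (card {e \<in> F - cyc_edges vs. v \<in> e})" using e1 e2 by simp
qed

definition Cyc :: "'v set set set" where "Cyc = {cyc_edges vs | vs. is_cycle E vs}"

definition spans :: "'v set set set \<Rightarrow> bool" where
  "spans B \<longleftrightarrow> (\<forall>F. even_subgraph E F \<longrightarrow> (\<exists>S\<subseteq>B. xsum S = F))"

lemma Cyc_spans: "spans Cyc"
  unfolding spans_def
proof (intro allI impI)
  fix F :: "'v set set"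
  show "even_subgraph E F \<Longrightarrow> \<exists>S\<subseteq>Cyc. xsum S = F"
  proof (induction "card F" arbitrary: F rule: less_induct)
    case less
    show ?case
    proof (cases "F = {}")
      case True then show ?thesis using xsum_empty by blast
    next
      case False
      obtain vs where vs: "is_cycle E vs" "cyc_edges vs \<subseteq> F" using find_cycle[OF less.prems False] by blast
      let ?C = "cyc_edges vs"
      have Cne: "?C \<noteq> {}" using card_cyc[OF vs(1)] cyc_len[OF vs(1)] by auto
      have "F - ?C \<subset> F" using Cne vs(2) by blast
      then have "card (F - ?C) < card F" by (rule psubset_card_mono[rotated]) simp
      moreover have "even_subgraph E (F - ?C)" by (rule even_diff_cyc[OF less.prems vs])
      ultimately obtain S' where S': "S' \<subseteq> Cyc" "xsum S' = F - ?C" using less.hyps by blast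
      let ?S = "S' - {?C} \<union> ({?C} - S')"
      have "xsum ?S = xsum S' - xsum {?C} \<union> (xsum {?C} - xsum S')"
        by (rule xsum_symdiff) simp_all
      also have "\<dots> = F" unfolding S' xsum_single using vs(2) by blast
      finally have "xsum ?S = F" .
      moreover have "?S \<subseteq> Cyc" using S' vs(1) unfolding Cyc_def by blast
      ultimately show ?thesis by blast
    qed
  qed
qed

lemma basis_exists: "\<exists>B. cycle_basis E B"
proof -
  have P0: "Cyc \<subseteq> Cyc \<and> spans Cyc" using Cyc_spans by blast
  obtain B where B: "B \<subseteq> Cyc" "spans B" and mn: "\<forall>B'. B' \<subseteq> Cyc \<and> spans B' \<longrightarrow> card B \<le> card B'"
    using ex_has_least_nat[of "\<lambda>B. B \<subseteq> Cyc \<and> spans B" Cyc card] P0 by blast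
  have uniq: "S1 = S2" if S1: "S1 \<subseteq> B" "xsum S1 = F" and S2: "S2 \<subseteq> B" "xsum S2 = F" for S1 S2 F
  proof (rule ccontr)
    assume ne: "S1 \<noteq> S2"
    let ?D = "S1 - S2 \<union> (S2 - S1)"
    have xD: "xsum ?D = {}" using xsum_symdiff[of S1 S2] S1 S2 by simp
    obtain C where C: "C \<in> ?D" using ne by blast
    have CB: "C \<in> B" using C S1 S2 by blast
    have "spans (B - {C})"
      unfolding spans_def
    proof (intro allI impI)
      fix G assume "even_subgraph E G"
      then obtain S where S: "S \<subseteq> B" "xsum S = G" using B(2) unfolding spans_def by blast
      show "\<exists>S\<subseteq>B - {C}. xsum S = G"
      proof (cases "C \<in> S")
        case False then show ?thesis using S by blast
      next
        case True
        let ?S' = "S - ?D \<union> (?D - S)"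
        have "xsum ?S' = xsum S - xsum ?D \<union> (xsum ?D - xsum S)" by (rule xsum_symdiff) simp_all
        then have "xsum ?S' = G" using xD S by simp
        moreover have "?S' \<subseteq> B - {C}" using True C S S1 S2 by blast
        ultimately show ?thesis by blast
      qed
    qed
    moreover have "B - {C} \<subseteq> Cyc" using B by blast
    ultimately have "card B \<le> card (B - {C})" using mn by blast
    moreover have "card (B - {C}) < card B" using CB by (intro card_Diff1_less) simp_all
    ultimately show False by simp
  qed
  have "cycle_basis E B"
    unfolding cycle_basis_def
  proof (intro conjI allI impI)
    show "finite B" by simp
    show "B \<subseteq> {cyc_edges vs |vs. is_cycle E vs}" using B(1) unfolding Cyc_def .
    fix F assume "even_subgraph E F"
    then obtain S where "S \<subseteq> B" "xsum S = F" using B(2) unfolding spans_def by blast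
    then show "\<exists>!S. S \<subseteq> B \<and> xsum S = F" using uniq by blast
  qed
  then show ?thesis by blast
qed

end

lemma pow2_dvd_zero:
  fixes x :: int
  assumes "\<forall>k. (2::int)^k dvd x" shows "x = 0"
proof (rule ccontr)
  assume x: "x \<noteq> 0"
  let ?k = "nat \<bar>x\<bar>"
  have "\<bar>(2::int)^?k\<bar> \<le> \<bar>x\<bar>" using dvd_imp_le_int[OF x] assms by blast
  moreover have "int ?k < 2^?k"
  proof -
    have "?k < 2^?k" by (rule less_exp)
    then have "int ?k < int (2^?k)" by (simp only: of_nat_less_iff)
    then show ?thesis by simp
  qed
  moreover have "int ?k = \<bar>x\<bar>" by simp
  moreover have "\<bar>(2::int)^?k\<bar> = 2^?k" by (simp only: power_abs abs_numeral)
  ultimately show False by linarith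
qed

context G begin

lemma zc_sum:
  assumes "finite S" "\<forall>C\<in>S. zc E (f C)"
  shows "zc E (\<lambda>p q. \<Sum>C\<in>S. f C p q)"
  unfolding zc_def
proof (intro conjI allI impI)
  fix p q
  have "\<forall>C\<in>S. f C q p = - f C p q" using assms unfolding zc_def by blast
  then have "(\<Sum>C\<in>S. f C q p) = (\<Sum>C\<in>S. - f C p q)" by (intro sum.cong) simp_all
  then show "(\<Sum>C\<in>S. f C q p) = - (\<Sum>C\<in>S. f C p q)" by (simp only: sum_negf)
next
  fix p q assume "\<not> E p q"
  then show "(\<Sum>C\<in>S. f C p q) = 0" using assms zc_zero by (intro sum.neutral) blast
next
  fix p
  have "(\<Sum>q\<in>UNIV. \<Sum>C\<in>S. f C p q) = (\<Sum>C\<in>S. \<Sum>q\<in>UNIV. f C p q)" by (rule sum.swap)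
  also have "\<dots> = 0" using assms unfolding zc_def by (intro sum.neutral) blast
  finally show "(\<Sum>q\<in>UNIV. \<Sum>C\<in>S. f C p q) = 0" .
qed

lemma dr_sum: "dr d (\<lambda>p q. \<Sum>C\<in>S. f C p q) = (\<Sum>C\<in>S. dr d (f C))"
proof -
  have "dr d (\<lambda>p q. \<Sum>C\<in>S. f C p q) = (\<Sum>p\<in>UNIV. \<Sum>q\<in>UNIV. \<Sum>C\<in>S. f C p q * d p q)"
    unfolding dr_def by (simp add: sum_distrib_right)
  also have "\<dots> = (\<Sum>C\<in>S. \<Sum>p\<in>UNIV. \<Sum>q\<in>UNIV. f C p q * d p q)" by (rule triple_swap)
  finally show ?thesis unfolding dr_def .
qed

lemma cb_sub: "cycle_basis E B \<Longrightarrow> B \<subseteq> {cyc_edges vs | vs. is_cycle E vs}"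
  unfolding cycle_basis_def by (elim conjE)

lemma cb_span: "cycle_basis E B \<Longrightarrow> even_subgraph E F \<Longrightarrow> \<exists>S. S \<subseteq> B \<and> xsum S = F"
  unfolding cycle_basis_def by (elim conjE allE impE) (assumption, erule ex1_implies_ex)

lemma drift_zero:
  assumes B: "cycle_basis E B"
    and dz: "\<forall>vs. is_cycle E vs \<and> cyc_edges vs \<in> B \<longrightarrow> dr d (ow vs) = 0"
  shows "zc E z \<Longrightarrow> dr d z = 0"
proof -
  define vsC where "vsC C = (SOME vs. is_cycle E vs \<and> cyc_edges vs = C)" for C
  have vsC: "is_cycle E (vsC C) \<and> cyc_edges (vsC C) = C" if "C \<in> B" for C
  proof -
    have "C \<in> {cyc_edges vs | vs. is_cycle E vs}" using cb_sub[OF B] that by (rule subsetD)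
    then have "\<exists>vs. is_cycle E vs \<and> cyc_edges vs = C" by blast
    then show ?thesis unfolding vsC_def by (rule someI_ex)
  qed
  have main: "\<forall>z. zc E z \<longrightarrow> (2::int)^k dvd dr d z" for k
  proof (induction k)
    case 0 then show ?case by simp
  next
    case (Suc k)
    show ?case
    proof (intro allI impI)
      fix z assume z: "zc E z"
      have "even_subgraph E (oddsupp E z)" by (rule even_oddsupp[OF z])
      then obtain S where S: "S \<subseteq> B" "xsum S = oddsupp E z" using cb_span[OF B] by blast
      define y where "y = (\<lambda>p q. \<Sum>C\<in>S. ow (vsC C) p q)"
      have yz: "zc E y" unfolding y_def
      proof (rule zc_sum)
        show "finite S" by simp
        show "\<forall>C\<in>S. zc E (ow (vsC C))"
        proof
          fix C assume "C \<in> S"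
          then have "is_cycle E (vsC C)" using S vsC by blast
          then show "zc E (ow (vsC C))" by (rule zc_ow[OF cyc_cw])
        qed
      qed
      have ydr: "dr d y = 0"
      proof -
        have "dr d y = (\<Sum>C\<in>S. dr d (ow (vsC C)))" unfolding y_def by (rule dr_sum)
        also have "\<dots> = 0"
        proof (rule sum.neutral, rule ballI)
          fix C assume "C \<in> S"
          then have "is_cycle E (vsC C) \<and> cyc_edges (vsC C) \<in> B" using S vsC by auto
          then show "dr d (ow (vsC C)) = 0" using dz by blast
        qed
        finally show ?thesis .
      qed
      have par: "even (z p q - y p q)" for p q
      proof -
        have "even (y p q) \<longleftrightarrow> even (card {C\<in>S. odd (ow (vsC C) p q)})"
          unfolding y_def by (rule even_sum_iff) simp
        also have "{C\<in>S. odd (ow (vsC C) p q)} = {C\<in>S. {p,q} \<in> C}"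
        proof -
          have "odd (ow (vsC C) p q) \<longleftrightarrow> {p,q} \<in> C" if "C \<in> S" for C
            using ow_odd[of "vsC C" p q] vsC[of C] that S by auto
          then show ?thesis by blast
        qed
        also have "even (card {C\<in>S. {p,q} \<in> C}) \<longleftrightarrow> {p,q} \<notin> xsum S" unfolding xsum_def by simp
        also have "\<dots> \<longleftrightarrow> even (z p q)" unfolding S(2) using oddsupp_mem[OF z] by simp
        finally show ?thesis by simp
      qed
      define w where "w = (\<lambda>p q. (z p q - y p q) div 2)"
      have zyw: "z p q = y p q + 2 * w p q" for p q
        using par[of p q] unfolding w_def by simp
      have wz: "zc E w"
        unfolding zc_def
      proof (intro conjI allI impI)
        fix p q
        have "z q p = - z p q" "y q p = - y p q" using z yz unfolding zc_def by blast+
        then have "2 * w q p = 2 * (- w p q)" using zyw[of p q] zyw[of q p] by simp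
        then show "w q p = - w p q" by simp
      next
        fix p q assume "\<not> E p q"
        then have "z p q = 0" "y p q = 0" using zc_zero z yz by blast+
        then show "w p q = 0" using zyw[of p q] by simp
      next
        fix p
        have "(\<Sum>q\<in>UNIV. z p q) = 0" "(\<Sum>q\<in>UNIV. y p q) = 0" using z yz unfolding zc_def by blast+
        moreover have "(\<Sum>q\<in>UNIV. z p q) = (\<Sum>q\<in>UNIV. y p q) + 2 * (\<Sum>q\<in>UNIV. w p q)"
          unfolding zyw by (simp add: sum.distrib sum_distrib_left)
        ultimately show "(\<Sum>q\<in>UNIV. w p q) = 0" by simp
      qed
      have "dr d z = dr d y + 2 * dr d w"
        unfolding dr_def zyw by (simp add: sum.distrib sum_distrib_left distrib_right mult.assoc)
      then have "dr d z = 2 * dr d w" using ydr by simp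
      moreover have "2^k dvd dr d w" using Suc.IH wz by blast
      ultimately show "2^Suc k dvd dr d z" by simp
    qed
  qed
  assume "zc E z"
  then show "dr d z = 0" using main pow2_dvd_zero by blast
qed

end

lemma modK: "(K::int) > 0 \<Longrightarrow> -K < x \<Longrightarrow> x < K \<Longrightarrow> x mod K = (if 0 \<le> x then x else x + K)"
proof -
  assume K: "K > 0" and l: "-K < x" and u: "x < K"
  show ?thesis
  proof (cases "0 \<le> x")
    case True then show ?thesis using u by simp
  next
    case False
    have "x mod K = (x + K) mod K" by simp
    also have "\<dots> = x + K" using False l by (intro mod_pos_pos_trivial) auto
    finally show ?thesis using False by simp
  qed
qed

lemma phi_ring: "(0::int) \<le> a \<Longrightarrow> a < K \<Longrightarrow> phi K a = (if a = K - 1 then 0 else a + 1)"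
  unfolding phi_def by auto

definition rel :: "int \<Rightarrow> int \<Rightarrow> int \<Rightarrow> bool" where
  "rel K a b \<longleftrightarrow> a = b \<or> a = phi K b \<or> b = phi K a"

lemma rel_lin: "0 \<le> a \<Longrightarrow> a < K \<Longrightarrow> 0 \<le> b \<Longrightarrow> b < K \<Longrightarrow>
  rel K a b \<longleftrightarrow> (a = b \<or> (b \<noteq> K - 1 \<and> a = b + 1) \<or> (b = K - 1 \<and> a = 0) \<or> (a \<noteq> K - 1 \<and> b = a + 1) \<or> (a = K - 1 \<and> b = 0))"
  unfolding rel_def using phi_ring[of a K] phi_ring[of b K] by auto

lemma min_lin: "3 \<le> K \<Longrightarrow> 0 \<le> a \<Longrightarrow> a < K \<Longrightarrow> 0 \<le> b \<Longrightarrow> b < (K::int) \<Longrightarrow>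
  min ((a - b) mod K) ((b - a) mod K) \<le> 1 \<longleftrightarrow> rel K a b"
proof -
  assume K: "3 \<le> K" and ab: "0 \<le> a" "a < K" "0 \<le> b" "b < K"
  have m1: "(a - b) mod K = (if 0 \<le> a - b then a - b else a - b + K)" using K ab by (intro modK) auto
  have m2: "(b - a) mod K = (if 0 \<le> b - a then b - a else b - a + K)" using K ab by (intro modK) auto
  show ?thesis unfolding rel_lin[OF ab] m1 m2 using K ab by (auto simp: min_def)
qed

lemma phi_in: "0 \<le> a \<Longrightarrow> a < K \<Longrightarrow> 0 \<le> phi K a \<and> phi K a < K"
  using phi_ring[of a K] by auto

lemma phi_neq: "3 \<le> K \<Longrightarrow> 0 \<le> a \<Longrightarrow> a < K \<Longrightarrow> phi K a \<noteq> a"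
  using phi_ring[of a K] by auto

lemma phi_phi_neq: "3 \<le> K \<Longrightarrow> 0 \<le> a \<Longrightarrow> a < K \<Longrightarrow> phi K (phi K a) \<noteq> a"
  using phi_ring[of a K] phi_ring[of "phi K a" K] phi_in[of a K] by (auto split: if_splits)

definition dl :: "int \<Rightarrow> int \<Rightarrow> int \<Rightarrow> int" where
  "dl K a b = (if (b - a) mod K = K - 1 then -1 else (b - a) mod K)"

lemma dl_dvd: "K dvd (dl K a b - (b - a))"
proof -
  have k: "K dvd ((b - a) mod K - (b - a))"
    by (metis dvd_minus_iff minus_diff_eq minus_mod_eq_mult_div dvd_triv_left)
  show ?thesis
  proof (cases "(b - a) mod K = K - 1")
    case True
    have "dl K a b - (b - a) = ((b - a) mod K - (b - a)) - K" using True unfolding dl_def by simp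
    moreover have "K dvd ((b - a) mod K - (b - a)) - K" using k by (rule dvd_diff) simp
    moreover have "((b - a) mod K - (b - a)) - K = dl K a b - (b - a)" using True unfolding dl_def by simp
    ultimately show ?thesis by simp
  next
    case False then show ?thesis using k unfolding dl_def by simp
  qed
qed

lemma dl_rel:
  assumes K: "3 \<le> K" and ab: "0 \<le> a" "a < K" "0 \<le> b" "b < K" and r: "rel K a b"
  shows "\<bar>dl K a b\<bar> \<le> 1" "dl K b a = - dl K a b" "a = phi K b \<Longrightarrow> dl K a b = -1"
proof -
  have m1: "(a - b) mod K = (if 0 \<le> a - b then a - b else a - b + K)" using K ab by (intro modK) auto
  have m2: "(b - a) mod K = (if 0 \<le> b - a then b - a else b - a + K)" using K ab by (intro modK) auto
  have rl: "a = b \<or> (b \<noteq> K - 1 \<and> a = b + 1) \<or> (b = K - 1 \<and> a = 0) \<or> (a \<noteq> K - 1 \<and> b = a + 1) \<or> (a = K - 1 \<and> b = 0)"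
    using r rel_lin[OF ab] by blast
  show "\<bar>dl K a b\<bar> \<le> 1" unfolding dl_def m2 using rl K ab by auto
  show "dl K b a = - dl K a b" unfolding dl_def m1 m2 using rl K ab by auto
  show "dl K a b = -1" if "a = phi K b"
    using that phi_ring[of b K] K ab unfolding dl_def m2 by auto
qed


lemma ring_iff: "x \<in> ring_set K \<longleftrightarrow> 0 \<le> x \<and> x < K"
  unfolding ring_set_def by auto

lemma WU_rel:
  assumes K: "3 \<le> K"
  shows "WU_i E K R c \<longleftrightarrow> (\<forall>p. R (c p) \<in> ring_set K) \<and> (\<forall>p q. E p q \<longrightarrow> rel K (R (c p)) (R (c q)))"
proof -
  have "min ((R (c p) - R (c q)) mod K) ((R (c q) - R (c p)) mod K) \<le> 1 \<longleftrightarrow> rel K (R (c p)) (R (c q))"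
    if "\<forall>p. R (c p) \<in> ring_set K" for p q
    using that min_lin[OF K, of "R (c p)" "R (c q)"] unfolding ring_iff by blast
  then show ?thesis unfolding WU_i_def by blast
qed

lemma WU_LC:
  assumes K: "3 \<le> K" and W: "WU_i E K R c"
  shows "LocallyCorrect E K R c p"
proof -
  have rr: "(\<forall>p. R (c p) \<in> ring_set K) \<and> (\<forall>p q. E p q \<longrightarrow> rel K (R (c p)) (R (c q)))"
    using WU_rel[OF K] W by (rule iffD1)
  have r: "\<forall>p. R (c p) \<in> ring_set K" using rr by (rule conjunct1)
  have rl: "\<forall>p q. E p q \<longrightarrow> rel K (R (c p)) (R (c q))" using rr by (rule conjunct2)
  show ?thesis unfolding LocallyCorrect_def
  proof (intro conjI allI impI)
    show "R (c p) \<in> ring_set K" using r by blast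
  next
    fix q assume "E p q"
    show "R (c q) \<in> ring_set K" using r by blast
  next
    fix q assume "E p q"
    then have "rel K (R (c p)) (R (c q))" using rl by blast
    then show "R (c p) = R (c q) \<or> R (c p) = phi K (R (c q)) \<or> phi K (R (c p)) = R (c q)"
      unfolding rel_def by (elim disjE) simp_all
  qed
qed

lemma wu_gen:
  assumes K: "3 \<le> K" and sym: "\<forall>p q. E p q \<longrightarrow> E q p" and W: "WU_i E K R c"
    and ch: "\<forall>p. R (c' p) = R (c p) \<or> (R (c' p) = phi K (R (c p)) \<and> NormalStepR E K R c p)"
  shows "WU_i E K R c'"
proof -
  have rr: "(\<forall>p. R (c p) \<in> ring_set K) \<and> (\<forall>p q. E p q \<longrightarrow> rel K (R (c p)) (R (c q)))"
    using WU_rel[OF K] W by (rule iffD1)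
  have r: "\<forall>p. R (c p) \<in> ring_set K" using rr by (rule conjunct1)
  have rl: "\<forall>p q. E p q \<longrightarrow> rel K (R (c p)) (R (c q))" using rr by (rule conjunct2)
  have r': "R (c' p) \<in> ring_set K" for p
  proof -
    have "0 \<le> R (c p) \<and> R (c p) < K" using r unfolding ring_iff by blast
    then have "0 \<le> phi K (R (c p)) \<and> phi K (R (c p)) < K" using phi_in by blast
    then show ?thesis using ch[rule_format, of p] r[rule_format, of p] unfolding ring_iff by auto
  qed
  have rl': "rel K (R (c' p)) (R (c' q))" if e: "E p q" for p q
  proof -
    let ?a = "R (c p)" and ?b = "R (c q)"
    have ar: "0 \<le> ?a" "?a < K" and br: "0 \<le> ?b" "?b < K" using r unfolding ring_iff by blast+
    have nsp: "?b = ?a \<or> ?b = phi K ?a" if "NormalStepR E K R c p"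
      using that e unfolding NormalStepR_def by blast
    have nsq: "?a = ?b \<or> ?a = phi K ?b" if "NormalStepR E K R c q"
      using that e sym unfolding NormalStepR_def by blast
    have r0: "rel K ?a ?b" using rl e by blast
    have n1: "phi K ?a \<noteq> ?a" "phi K (phi K ?a) \<noteq> ?a" using phi_neq[OF K ar] phi_phi_neq[OF K ar] by auto
    have n2: "phi K ?b \<noteq> ?b" "phi K (phi K ?b) \<noteq> ?b" using phi_neq[OF K br] phi_phi_neq[OF K br] by auto
    show ?thesis
      using ch[rule_format, of p] ch[rule_format, of q]
    proof (elim disjE conjE)
      assume "R (c' p) = ?a" "R (c' q) = ?b" then show ?thesis using r0 by simp
    next
      assume a: "R (c' p) = ?a" "R (c' q) = phi K ?b" "NormalStepR E K R c q"
      from nsq[OF a(3)] show ?thesis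
      proof
        assume "?a = ?b" then show ?thesis using a(1,2) unfolding rel_def by simp
      next
        assume "?a = phi K ?b" then show ?thesis using a(1,2) unfolding rel_def by simp
      qed
    next
      assume a: "R (c' p) = phi K ?a" "NormalStepR E K R c p" "R (c' q) = ?b"
      from nsp[OF a(2)] show ?thesis
      proof
        assume "?b = ?a" then show ?thesis using a(1,3) unfolding rel_def by simp
      next
        assume "?b = phi K ?a" then show ?thesis using a(1,3) unfolding rel_def by simp
      qed
    next
      assume a: "R (c' p) = phi K ?a" "NormalStepR E K R c p" "R (c' q) = phi K ?b" "NormalStepR E K R c q"
      have "?a = ?b"
      proof (rule ccontr)
        assume ne: "?a \<noteq> ?b"
        then have b: "?b = phi K ?a" using nsp[OF a(2)] by auto
        have "?a = phi K ?b" using nsq[OF a(4)] ne by auto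
        then have "?a = phi K (phi K ?a)" using b by simp
        then show False using n1(2) by simp
      qed
      then show ?thesis using a unfolding rel_def by simp
    qed
  qed
  show ?thesis unfolding WU_rel[OF K] using r' rl' by blast
qed

locale Alg = G E for E :: "'v::finite \<Rightarrow> 'v \<Rightarrow> bool" +
  fixes P :: "('v, 's) alg"
  assumes gE: "gE P = E" and K1: "3 \<le> k1 P" and K2: "3 \<le> k2 P"
begin

lemma WU_enabled:
  assumes W: "WU P c" and en: "enabled P c p a" shows "a = NA"
proof -
  have W1: "WU_i E (k1 P) r1 c" and W2: "WU_i E (k2 P) r2 c" using W gE unfolding WU_def by auto
  have r1: "0 \<le> r1 (c p)" using W1 unfolding WU_i_def ring_iff by blast
  have r2: "0 \<le> r2 (c p)" using W2 unfolding WU_i_def ring_iff by blast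
  have lc1: "LocallyCorrect E (k1 P) r1 c p" by (rule WU_LC[OF K1 W1])
  have lc2: "LocallyCorrect E (k2 P) r2 c p" by (rule WU_LC[OF K2 W2])
  show ?thesis
  proof (cases a)
    case NA then show ?thesis .
  next
    case CA1 then have "r1 (c p) \<in> tlS_set (al1 P)" using en unfolding enabled_def ConvergenceStep_def by simp
    then show ?thesis using r1 unfolding tlS_set_def by simp
  next
    case CA2 then have "r2 (c p) \<in> tlS_set (al2 P)" using en unfolding enabled_def ConvergenceStep_def by simp
    then show ?thesis using r2 unfolding tlS_set_def by simp
  next
    case RA1 then show ?thesis using en lc1 gE unfolding enabled_def ResetInit_def by simp
  next
    case RA2 then show ?thesis using en lc2 gE unfolding enabled_def ResetInit_def by simp
  qed
qed

lemma res_r1: "r1 (result P c p NA) = phi (k1 P) (r1 (c p))"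
  unfolding result_def Let_def by simp

lemma res_r2: "r2 (result P c p NA) = r2 (c p) \<or> (r2 (result P c p NA) = phi (k2 P) (r2 (c p)) \<and> NormalStepR E (k2 P) r2 c p)"
  unfolding result_def Let_def gE by simp

lemma step_info:
  assumes W: "WU P c" and st: "step P c \<sigma> c'"
  shows "\<sigma> p = None \<Longrightarrow> c' p = c p"
    and "\<sigma> p \<noteq> None \<Longrightarrow> \<sigma> p = Some NA \<and> NormalStepR E (k1 P) r1 c p \<and> r1 (c' p) = phi (k1 P) (r1 (c p))
           \<and> (r2 (c' p) = r2 (c p) \<or> (r2 (c' p) = phi (k2 P) (r2 (c p)) \<and> NormalStepR E (k2 P) r2 c p))"
proof -
  have cs: "case \<sigma> p of None \<Rightarrow> c' p = c p | Some a \<Rightarrow> enabled P c p a \<and> c' p = result P c p a"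
    using st unfolding step_def by blast
  show "\<sigma> p = None \<Longrightarrow> c' p = c p" using cs by simp
  assume "\<sigma> p \<noteq> None"
  then obtain a where a: "\<sigma> p = Some a" by blast
  then have en: "enabled P c p a" and cp: "c' p = result P c p a" using cs by simp_all
  have aN: "a = NA" by (rule WU_enabled[OF W en])
  have "NormalStepR E (k1 P) r1 c p" using en aN gE unfolding enabled_def NormalStep_def by simp
  then show "\<sigma> p = Some NA \<and> NormalStepR E (k1 P) r1 c p \<and> r1 (c' p) = phi (k1 P) (r1 (c p))
           \<and> (r2 (c' p) = r2 (c p) \<or> (r2 (c' p) = phi (k2 P) (r2 (c p)) \<and> NormalStepR E (k2 P) r2 c p))"
    using a aN cp res_r1 res_r2 by simp
qed

lemma step_WU:
  assumes W: "WU P c" and st: "step P c \<sigma> c'" shows "WU P c'"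
proof -
  have W1: "WU_i E (k1 P) r1 c" and W2: "WU_i E (k2 P) r2 c" using W gE unfolding WU_def by auto
  have ch1: "\<forall>p. r1 (c' p) = r1 (c p) \<or> (r1 (c' p) = phi (k1 P) (r1 (c p)) \<and> NormalStepR E (k1 P) r1 c p)"
  proof
    fix p show "r1 (c' p) = r1 (c p) \<or> (r1 (c' p) = phi (k1 P) (r1 (c p)) \<and> NormalStepR E (k1 P) r1 c p)"
      using step_info[OF W st, of p] by (cases "\<sigma> p") auto
  qed
  have ch2: "\<forall>p. r2 (c' p) = r2 (c p) \<or> (r2 (c' p) = phi (k2 P) (r2 (c p)) \<and> NormalStepR E (k2 P) r2 c p)"
  proof
    fix p show "r2 (c' p) = r2 (c p) \<or> (r2 (c' p) = phi (k2 P) (r2 (c p)) \<and> NormalStepR E (k2 P) r2 c p)"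
      using step_info[OF W st, of p] by (cases "\<sigma> p") auto
  qed
  have "WU_i E (k1 P) r1 c'" by (rule wu_gen[OF K1 sym W1 ch1])
  moreover have "WU_i E (k2 P) r2 c'" by (rule wu_gen[OF K2 sym W2 ch2])
  ultimately show ?thesis unfolding WU_def gE by simp
qed

end

context G begin

lemma closed_walk:
  assumes fE: "\<forall>p. E p (f p)"
  shows "\<exists>ws. cw E ws \<and> (\<forall>i<length ws. nx ws i = f (ws!i))"
proof -
  define g where "g k = (f^^k) undefined" for k
  have ni: "\<not> inj g"
  proof
    assume "inj g"
    moreover have "finite (range g)" by simp
    ultimately have "finite (UNIV::nat set)" using finite_imageD by blast
    then show False by simp
  qed
  then obtain i0 j0 where ij0: "i0 \<noteq> j0" "g i0 = g j0" unfolding inj_def by blast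
  obtain i j where ij: "i < j" "g i = g j"
  proof (cases "i0 < j0")
    case True then show ?thesis using that ij0 by blast
  next
    case False then have "j0 < i0" using ij0 by simp
    then show ?thesis using that ij0 by (metis)
  qed
  define y where "y = g i"
  define n where "n = j - i"
  have n0: "0 < n" using ij unfolding n_def by simp
  have fny: "(f^^n) y = y"
  proof -
    have "(f^^n) y = (f^^(n + i)) undefined" unfolding y_def g_def by (simp add: funpow_add)
    also have "n + i = j" using ij unfolding n_def by simp
    finally show ?thesis using ij unfolding y_def g_def by simp
  qed
  define ws where "ws = map (\<lambda>k. (f^^k) y) [0..<n]"
  have lws: "length ws = n" unfolding ws_def by simp
  have nth: "ws!k = (f^^k) y" if "k < n" for k using that unfolding ws_def by simp
  have nxf: "nx ws k = f (ws!k)" if k: "k < n" for k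
  proof (cases "k + 1 < n")
    case True
    then have "nx ws k = ws!(k+1)" unfolding nx_def lws by simp
    also have "\<dots> = (f^^(Suc k)) y" using nth True by simp
    also have "\<dots> = f (ws!k)" using nth k by simp
    finally show ?thesis .
  next
    case False
    then have kn: "k + 1 = n" using k by simp
    then have "nx ws k = ws!0" unfolding nx_def lws by simp
    also have "\<dots> = y" using nth n0 by simp
    also have "\<dots> = (f^^(Suc k)) y" using fny kn by simp
    also have "\<dots> = f (ws!k)" using nth k by simp
    finally show ?thesis .
  qed
  have "cw E ws" unfolding cw_def
  proof (intro conjI allI impI)
    show "ws \<noteq> []" using lws n0 by auto
    fix k assume "k < length ws"
    then show "E (ws!k) (nx ws k)" using nxf lws fE by simp
  qed
  then show ?thesis using nxf lws by auto
qed

end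

context Alg begin

lemma basis_small:
  "\<exists>B. cycle_basis E B \<and> (\<forall>C\<in>B. card C \<le> C_G E)"
proof (cases "has_cycle E")
  case True
  define M where "M = (\<lambda>B. Max (card ` B)) ` {B. cycle_basis E B}"
  have Meq: "{Max (card ` B) | B. cycle_basis E B} = M" unfolding M_def by blast
  have fM: "finite M" unfolding M_def by simp
  have nM: "M \<noteq> {}" using basis_exists unfolding M_def by blast
  have "C_G E = Min M" unfolding C_G_def using True Meq by simp
  then have "C_G E \<in> M" using Min_in[OF fM nM] by simp
  then obtain B where B: "cycle_basis E B" "Max (card ` B) = C_G E" unfolding M_def by (auto elim!: imageE)
  have "\<forall>C\<in>B. card C \<le> C_G E"
  proof
    fix C assume "C \<in> B"
    then have "card C \<le> Max (card ` B)" by (intro Max_ge) simp_all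
    then show "card C \<le> C_G E" using B by simp
  qed
  then show ?thesis using B by blast
next
  case False
  obtain B where B: "cycle_basis E B" using basis_exists by blast
  have "B \<subseteq> {cyc_edges vs | vs. is_cycle E vs}" using cb_sub[OF B] .
  moreover have "{cyc_edges vs | vs. is_cycle E vs} = {}" using False unfolding has_cycle_def by blast
  ultimately have "B = {}" by blast
  then show ?thesis using B by blast
qed

lemma deadlock_free:
  assumes W: "WU P c" and KC: "int (C_G E) < k1 P"
  shows "\<exists>p. NormalStepR E (k1 P) r1 c p"
proof (rule ccontr)
  assume nd: "\<nexists>p. NormalStepR E (k1 P) r1 c p"
  define K where "K = k1 P"
  have K3: "3 \<le> K" using K1 unfolding K_def .
  define R where "R p = r1 (c p)" for p
  have W1: "WU_i E K r1 c" using W gE unfolding WU_def K_def by auto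
  have rr: "(\<forall>p. r1 (c p) \<in> ring_set K) \<and> (\<forall>p q. E p q \<longrightarrow> rel K (r1 (c p)) (r1 (c q)))"
    using WU_rel[OF K3] W1 by (rule iffD1)
  have rg: "0 \<le> R p" "R p < K" for p using rr unfolding R_def ring_iff by blast+
  have rl: "rel K (R p) (R q)" if "E p q" for p q using rr that unfolding R_def by blast
  define d where "d p q = dl K (R p) (R q)" for p q
  have dant: "\<forall>p q. E p q \<longrightarrow> d q p = - d p q"
  proof (intro allI impI)
    fix p q assume "E p q"
    then show "d q p = - d p q" unfolding d_def using dl_rel(2)[OF K3 rg(1,2)[of p] rg(1,2)[of q] rl] by blast
  qed
  obtain B where B: "cycle_basis E B" and Bs: "\<forall>C\<in>B. card C \<le> C_G E" using basis_small by blast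
  have dz: "\<forall>vs. is_cycle E vs \<and> cyc_edges vs \<in> B \<longrightarrow> dr d (ow vs) = 0"
  proof (intro allI impI)
    fix vs assume a: "is_cycle E vs \<and> cyc_edges vs \<in> B"
    then have c: "is_cycle E vs" and cB: "cyc_edges vs \<in> B" by blast+
    have cwv: "cw E vs" by (rule cyc_cw[OF c])
    have Ed: "E (vs!i) (nx vs i)" if "i < length vs" for i using cwv that unfolding cw_def by blast
    define S where "S = (\<Sum>i<length vs. d (vs!i) (nx vs i))"
    have drS: "dr d (ow vs) = 2 * S" unfolding S_def by (rule dr_ow[OF dant cwv])
    have tel: "(\<Sum>i<length vs. R (nx vs i) - R (vs!i)) = 0"
    proof -
      have "(\<Sum>i<length vs. R (nx vs i)) = (\<Sum>i<length vs. R (vs!i))"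
        unfolding nx_def by (rule sum_rot[of "\<lambda>j. R (vs!j)"])
      then show ?thesis by (simp add: sum_subtractf)
    qed
    have "K dvd (\<Sum>i<length vs. d (vs!i) (nx vs i) - (R (nx vs i) - R (vs!i)))"
      unfolding d_def by (intro dvd_sum) (rule dl_dvd)
    moreover have "(\<Sum>i<length vs. d (vs!i) (nx vs i) - (R (nx vs i) - R (vs!i))) = S - (\<Sum>i<length vs. R (nx vs i) - R (vs!i))"
      unfolding S_def by (rule sum_subtractf)
    ultimately have KS: "K dvd S" unfolding tel by simp
    have "\<bar>S\<bar> \<le> (\<Sum>i<length vs. \<bar>d (vs!i) (nx vs i)\<bar>)" unfolding S_def by (rule sum_abs)
    also have "\<dots> \<le> (\<Sum>i<length vs. 1)"
    proof (rule sum_mono)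
      fix i assume "i \<in> {..<length vs}"
      then have "E (vs!i) (nx vs i)" using Ed by simp
      then show "\<bar>d (vs!i) (nx vs i)\<bar> \<le> 1"
        unfolding d_def using dl_rel(1)[OF K3 rg(1,2)[of "vs!i"] rg(1,2)[of "nx vs i"] rl] by blast
    qed
    also have "\<dots> = int (length vs)" by simp
    also have "\<dots> = int (card (cyc_edges vs))" using card_cyc[OF c] by simp
    also have "\<dots> \<le> int (C_G E)" using Bs cB by simp
    also have "\<dots> < K" using KC unfolding K_def .
    finally have aS: "\<bar>S\<bar> < K" .
    have "S = 0"
    proof (rule ccontr)
      assume "S \<noteq> 0"
      then have "\<bar>K\<bar> \<le> \<bar>S\<bar>" using dvd_imp_le_int KS by blast
      then show False using aS K3 by simp
    qed
    then show "dr d (ow vs) = 0" using drS by simp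
  qed
  have dzz: "dr d z = 0" if "zc E z" for z by (rule drift_zero[OF B dz that])
  have "\<forall>p. \<exists>q. E p q \<and> d p q = -1"
  proof
    fix p
    have "\<not> NormalStepR E K r1 c p" using nd unfolding K_def by blast
    moreover have "r1 (c p) \<in> ring_set K" using rr by blast
    ultimately obtain q where q: "E p q" "R q \<noteq> R p" "R q \<noteq> phi K (R p)"
      unfolding NormalStepR_def R_def by blast
    have "R p = phi K (R q)" using rl[OF q(1)] q(2,3) unfolding rel_def by auto
    then have "d p q = -1" unfolding d_def using dl_rel(3)[OF K3 rg(1,2)[of p] rg(1,2)[of q] rl[OF q(1)]] by blast
    then show "\<exists>q. E p q \<and> d p q = -1" using q by blast
  qed
  then obtain f where f: "\<forall>p. E p (f p) \<and> d p (f p) = -1" by metis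
  obtain ws where ws: "cw E ws" "\<forall>i<length ws. nx ws i = f (ws!i)" using closed_walk[of f] f by blast
  have "dr d (ow ws) = 2 * (\<Sum>i<length ws. d (ws!i) (nx ws i))" by (rule dr_ow[OF dant ws(1)])
  also have "(\<Sum>i<length ws. d (ws!i) (nx ws i)) = (\<Sum>i<length ws. -1)"
    using ws(2) f by (intro sum.cong) simp_all
  also have "\<dots> = - int (length ws)" by simp
  finally have "dr d (ow ws) = - 2 * int (length ws)" by simp
  moreover have "ws \<noteq> []" using ws(1) unfolding cw_def by blast
  moreover have "dr d (ow ws) = 0" by (rule dzz[OF zc_ow[OF ws(1)]])
  ultimately show False by simp
qed

end

context Alg begin

lemma exec_WU:
  assumes W0: "WU P (c 0)" and st: "\<forall>i<n. step P (c i) (\<sigma> i) (c (Suc i))"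
  shows "WU P (c n)"
  using st
proof (induction n)
  case 0 then show ?case using W0 by simp
next
  case (Suc n)
  then have "WU P (c n)" by simp
  moreover have "step P (c n) (\<sigma> n) (c (Suc n))" using Suc.prems by simp
  ultimately show ?case by (rule step_WU)
qed

lemma nb_finite:
  assumes W: "\<forall>i. WU P (c i)" and st: "\<forall>i. step P (c i) (\<sigma> i) (c (Suc i))"
    and e: "E p q" and T: "\<forall>i\<ge>T. \<sigma> i p = None"
  shows "\<exists>T'. \<forall>i\<ge>T'. \<sigma> i q = None"
proof -
  define K where "K = k1 P"
  have K3: "3 \<le> K" using K1 unfolding K_def .
  have rg: "0 \<le> r1 (c i x) \<and> r1 (c i x) < K" for i x
  proof -
    have "WU_i E (k1 P) r1 (c i)" using W gE unfolding WU_def by auto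
    then show ?thesis unfolding WU_i_def ring_iff K_def by blast
  qed
  define v where "v = r1 (c T p)"
  have pv: "r1 (c i p) = v" if "T \<le> i" for i
    using that
  proof (induction i rule: dec_induct)
    case base then show ?case unfolding v_def ..
  next
    case (step i)
    have "\<sigma> i p = None" using T step.hyps(1) by simp
    then have "c (Suc i) p = c i p" using step_info(1)[OF W[rule_format] st[rule_format]] by blast
    then show ?case using step.IH by simp
  qed
  have vr: "0 \<le> v" "v < K" using rg unfolding v_def by blast+
  define Gf where "Gf x = (if x = phi K v then (0::nat) else if x = v then 1 else 2)" for x
  define h where "h k = Gf (r1 (c (T + k) q))" for k
  have dec: "h (Suc k) \<le> h k \<and> (\<sigma> (T + k) q \<noteq> None \<longrightarrow> h (Suc k) < h k)" for k
  proof (cases "\<sigma> (T + k) q = None")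
    case True
    then have "c (Suc (T + k)) q = c (T + k) q" using step_info(1)[OF W[rule_format] st[rule_format]] by blast
    then show ?thesis unfolding h_def using True by simp
  next
    case False
    let ?i = "T + k"
    let ?x = "r1 (c ?i q)"
    have info: "NormalStepR E (k1 P) r1 (c ?i) q \<and> r1 (c (Suc ?i) q) = phi (k1 P) ?x"
      using step_info(2)[OF W[rule_format] st[rule_format] False] by blast
    have "E q p" using e sym by blast
    then have "r1 (c ?i p) = ?x \<or> r1 (c ?i p) = phi K ?x"
      using info unfolding NormalStepR_def K_def by blast
    then have vx: "v = ?x \<or> v = phi K ?x" using pv[of ?i] by simp
    have xr: "0 \<le> ?x" "?x < K" using rg by blast+
    have new: "r1 (c (Suc ?i) q) = phi K ?x" using info unfolding K_def by blast
    have hS: "h (Suc k) = Gf (phi K ?x)" unfolding h_def using new by simp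
    have hk: "h k = Gf ?x" unfolding h_def by simp
    have "Gf (phi K ?x) < Gf ?x"
      using vx
    proof
      assume a: "v = ?x"
      have "phi K v \<noteq> v" by (rule phi_neq[OF K3 vr])
      then show ?thesis unfolding Gf_def using a by simp
    next
      assume a: "v = phi K ?x"
      have n1: "phi K v \<noteq> v" by (rule phi_neq[OF K3 vr])
      have n2: "phi K ?x \<noteq> ?x" by (rule phi_neq[OF K3 xr])
      have n3: "phi K (phi K ?x) \<noteq> ?x" by (rule phi_phi_neq[OF K3 xr])
      have "?x \<noteq> phi K v" using a n3 by simp
      moreover have "?x \<noteq> v" using a n2 by simp
      ultimately have "Gf ?x = 2" unfolding Gf_def by simp
      moreover have "Gf (phi K ?x) = 1" unfolding Gf_def using a n1 by simp
      ultimately show ?thesis by simp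
    qed
    then show ?thesis using hS hk by simp
  qed
  have anti: "h k' \<le> h k" if "k \<le> k'" for k k'
    using lift_Suc_antimono_le[of h k k'] dec that by blast
  obtain k0 where k0: "\<forall>k. h k0 \<le> h k" using ex_has_least_nat[of "\<lambda>_. True" 0 h] by blast
  have "\<forall>i\<ge>T + k0. \<sigma> i q = None"
  proof (intro allI impI)
    fix i assume i: "T + k0 \<le> i"
    define k where "k = i - T"
    have ik: "i = T + k" and kk: "k0 \<le> k" using i unfolding k_def by auto
    show "\<sigma> i q = None"
    proof (rule ccontr)
      assume "\<sigma> i q \<noteq> None"
      then have "h (Suc k) < h k" using dec[of k] ik by simp
      moreover have "h k \<le> h k0" using anti[OF kk] .
      moreover have "h k0 \<le> h (Suc k)" using k0 by blast
      ultimately show False by simp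
    qed
  qed
  then show ?thesis by blast
qed

lemma live:
  assumes W0: "WU P (c 0)" and st: "\<forall>i. step P (c i) (\<sigma> i) (c (Suc i))"
    and conn: "\<forall>p q. E\<^sup>*\<^sup>* p q"
  shows "infinite {i. \<sigma> i p0 \<noteq> None}"
proof
  assume fin: "finite {i. \<sigma> i p0 \<noteq> None}"
  have W: "\<forall>i. WU P (c i)"
  proof
    fix n show "WU P (c n)" using exec_WU[of c n \<sigma>] W0 st by blast
  qed
  obtain m where m: "\<forall>i\<in>{i. \<sigma> i p0 \<noteq> None}. i \<le> m" using fin finite_nat_set_iff_bounded_le by blast
  have T0: "\<forall>i\<ge>Suc m. \<sigma> i p0 = None" using m by force
  have all: "\<exists>T. \<forall>i\<ge>T. \<sigma> i q = None" for q
  proof -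
    have "E\<^sup>*\<^sup>* p0 q" using conn by blast
    then show ?thesis
    proof (induction rule: rtranclp_induct)
      case base then show ?case using T0 by blast
    next
      case (step y z)
      then obtain T where "\<forall>i\<ge>T. \<sigma> i y = None" by blast
      then show ?case using nb_finite[OF W st step.hyps(2)] by blast
    qed
  qed
  then obtain Tf where Tf: "\<forall>q. \<forall>i\<ge>Tf q. \<sigma> i q = None" by metis
  define T where "T = Max (range Tf)"
  have "Tf q \<le> T" for q unfolding T_def by (rule Max_ge) simp_all
  then have none: "\<sigma> T q = None" for q using Tf by blast
  have "step P (c T) (\<sigma> T) (c (Suc T))" using st by blast
  then obtain q where "\<sigma> T q \<noteq> None" unfolding step_def by blast
  then show False using none[of q] by simp
qed

end

theorem proposition2:
  fixes E :: "'v::finite \<Rightarrow> 'v \<Rightarrow> bool"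
    and \<alpha>1 \<alpha>2 K1 K2 \<rho> :: int
    and cond cond1 :: "('v \<Rightarrow> 's st) \<Rightarrow> 'v \<Rightarrow> bool"
    and Init Comp :: "('v \<Rightarrow> 's st) \<Rightarrow> 'v \<Rightarrow> 's"
    and c0 :: "'v \<Rightarrow> 's st"
  defines "P \<equiv> \<lparr>gE = E, al1 = \<alpha>1, al2 = \<alpha>2, k1 = K1, k2 = K2, rho = \<rho>,
                 cnd = cond, cnd1 = cond1, ini = Init, cmp = Comp\<rparr>"
  assumes sym: "\<forall>p q. E p q \<longrightarrow> E q p"
    and irrefl: "\<forall>p. \<not> E p p"
    and connected: "\<forall>p q. E\<^sup>*\<^sup>* p q"
    and a1: "\<alpha>1 \<ge> 1" and a2: "\<alpha>2 \<ge> 1"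
    and K1: "K1 \<ge> 3" and K2: "K2 \<ge> 3"
    and rho: "\<rho> \<ge> 1"
    and aT1: "\<alpha>1 \<ge> int (T_G E)" and aT2: "\<alpha>2 \<ge> int (T_G E)"
    and KC1: "K1 > int (C_G E)" and KC2: "K2 > int (C_G E)"
    and init: "WU P c0"
  shows "(\<forall>n (c :: nat \<Rightarrow> 'v \<Rightarrow> 's st) \<sigma>. c 0 = c0 \<and> (\<forall>i < n. step P (c i) (\<sigma> i) (c (Suc i)))
             \<longrightarrow> (\<exists>p a. enabled P (c n) p a))
       \<and> (\<forall>(c :: nat \<Rightarrow> 'v \<Rightarrow> 's st) \<sigma>. c 0 = c0 \<and> (\<forall>i. step P (c i) (\<sigma> i) (c (Suc i)))
             \<longrightarrow> (\<forall>p. infinite {i. \<sigma> i p = Some NA \<and> r1 (c (Suc i) p) = phi K1 (r1 (c i p))}))"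
proof -
  interpret A: Alg E P
    by unfold_locales (simp_all add: P_def sym irrefl K1 K2)
  have gEP: "gE P = E" and k1P: "k1 P = K1" and k2P: "k2 P = K2" by (simp_all add: P_def)
  have KC: "int (C_G E) < k1 P" using KC1 k1P by simp
  show ?thesis
  proof (intro conjI allI impI)
    fix n and c :: "nat \<Rightarrow> 'v \<Rightarrow> 's st" and \<sigma>
    assume a: "c 0 = c0 \<and> (\<forall>i<n. step P (c i) (\<sigma> i) (c (Suc i)))"
    have W: "WU P (c n)" using A.exec_WU[of c n \<sigma>] a init by simp
    obtain p where p: "NormalStepR E (k1 P) r1 (c n) p" using A.deadlock_free[OF W KC] by blast
    have W2: "WU_i E (k2 P) r2 (c n)" using W gEP unfolding WU_def by simp
    have "LocallyCorrect E (k2 P) r2 (c n) p" by (rule WU_LC[OF A.K2 W2])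
    then have "enabled P (c n) p NA" using p gEP unfolding enabled_def NormalStep_def by simp
    then show "\<exists>p a. enabled P (c n) p a" by blast
  next
    fix c :: "nat \<Rightarrow> 'v \<Rightarrow> 's st" and \<sigma> p
    assume a: "c 0 = c0 \<and> (\<forall>i. step P (c i) (\<sigma> i) (c (Suc i)))"
    have W0: "WU P (c 0)" using a init by simp
    have st: "\<forall>i. step P (c i) (\<sigma> i) (c (Suc i))" using a by blast
    have W: "WU P (c i)" for i using A.exec_WU[of c i \<sigma>] W0 st by blast
    have inf: "infinite {i. \<sigma> i p \<noteq> None}" by (rule A.live[OF W0 st connected])
    have "{i. \<sigma> i p \<noteq> None} \<subseteq> {i. \<sigma> i p = Some NA \<and> r1 (c (Suc i) p) = phi K1 (r1 (c i p))}"
    proof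
      fix i assume "i \<in> {i. \<sigma> i p \<noteq> None}"
      then have "\<sigma> i p \<noteq> None" by simp
      then have "\<sigma> i p = Some NA \<and> r1 (c (Suc i) p) = phi (k1 P) (r1 (c i p))"
        using A.step_info(2)[OF W st[rule_format]] by blast
      then show "i \<in> {i. \<sigma> i p = Some NA \<and> r1 (c (Suc i) p) = phi K1 (r1 (c i p))}" using k1P by simp
    qed
    then show "infinite {i. \<sigma> i p = Some NA \<and> r1 (c (Suc i) p) = phi K1 (r1 (c i p))}"
      using inf finite_subset by blast
  qed
qed


end
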